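(* Grounded semantics is serialisable with the selection function $\alpha_{gr}(X,Y,Z)=X$ and the termination function $\beta_{co}(F,S)=1$ if $\mathrm{IS}^u(F)=\emptyset$ and $\beta_{co}(F,S)=0$ otherwise.
   Context: An abstract argumentation framework (AF) is a pair $F=(A,R)$ with $A$ a finite subset of a fixed universal set of arguments $\mathfrak{A}$ and $R\subseteq A\times A$ ($a\to b$ means $(a,b)\in R$). For $S\subseteq A$: $S^+=\{a\mid \exists b\in S: b\to a\}$, $S^-=\{a\mid\exists b\in S: a\to b\}$; for sets $S,S'$, $S\to S'$ means $S^+\cap S'\neq\emptyset$. $S$ is admissible if it is conflict-free and every attacker of an element of $S$ is attacked by some element of $S$. A complete extension is an admissible set containing every argument it defends; the grounded extension is the inclusion-minimal complete extension, and grounded semantics assigns to $F$ the set containing it. An initial set is a non-empty admissible set with no non-empty admissible proper subset; $\mathrm{IS}(F)$ is the set of initial sets. An initial set $S$ is unattacked if $S^-=\emptyset$; unchallenged if $S^-\neq\emptyset$ and no $S'\in\mathrm{IS}(F)$ has $S'\to S$; challenged if some $S'\in\mathrm{IS}(F)$ has $S'\to S$. Write $\mathrm{IS}^{u}(F),\mathrm{IS}^{uc}(F),\mathrm{IS}^{c}(F)$ for these sets. The reduct is $F^S=(A',R\cap(A'\times A'))$ with $A'=A\setminus(S\cup S^+)$. A selection function $\alpha$ maps any three sets $X,Y,Z$ of sets of arguments to a subset of $X\cup Y\cup Z$; a termination function $\beta$ maps pairs $(F,S)$ to $\{0,1\}$. Transitions: $(F,S)\to(F^{S'},S\cup S')$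 whenever $S'\in\alpha(\mathrm{IS}^u(F),\mathrm{IS}^{uc}(F),\mathrm{IS}^c(F))$. $(F,S)\leadsto^{\alpha,\beta}(F',S')$ means $(F',S')$ is reachable from $(F,S)$ in finitely many (possibly zero) transitions and $\beta(F',S')=1$. $\mathcal{E}^{\alpha,\beta}(F)$ is the set of all $S$ with $(F,\emptyset)\leadsto^{\alpha,\beta}(F',S)$ for some $F'$. A semantics $\sigma$ is serialisable with $\alpha,\beta$ if $\sigma(F)=\mathcal{E}^{\alpha,\beta}(F)$ for all AFs $F$. *)

theory Defs
  imports Main
begin

type_synonym 'a af = "'a set \<times> ('a \<times> 'a) set"

definition is_AF :: "'a af \<Rightarrow> bool" where
  "is_AF F \<longleftrightarrow> finite (fst F) \<and> snd F \<subseteq> fst F \<times> fst F"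

definition plus_set :: "'a af \<Rightarrow> 'a set \<Rightarrow> 'a set" where
  "plus_set F S = {a. \<exists>b\<in>S. (b, a) \<in> snd F}"

definition minus_set :: "'a af \<Rightarrow> 'a set \<Rightarrow> 'a set" where
  "minus_set F S = {a. \<exists>b\<in>S. (a, b) \<in> snd F}"

definition attacks_set :: "'a af \<Rightarrow> 'a set \<Rightarrow> 'a set \<Rightarrow> bool" where
  "attacks_set F S S' \<longleftrightarrow> plus_set F S \<inter> S' \<noteq> {}"

definition conflict_free :: "'a af \<Rightarrow> 'a set \<Rightarrow> bool" where
  "conflict_free F S \<longleftrightarrow> (\<forall>a\<in>S. \<forall>b\<in>S. (a, b) \<notin> snd F)"

definition defends :: "'a af \<Rightarrow> 'a set \<Rightarrow> 'a \<Rightarrow> bool" where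
  "defends F S a \<longleftrightarrow> (\<forall>b. (b, a) \<in> snd F \<longrightarrow> (\<exists>c\<in>S. (c, b) \<in> snd F))"

definition admissible :: "'a af \<Rightarrow> 'a set \<Rightarrow> bool" where
  "admissible F S \<longleftrightarrow> S \<subseteq> fst F \<and> conflict_free F S \<and> (\<forall>a\<in>S. defends F S a)"

definition complete_ext :: "'a af \<Rightarrow> 'a set \<Rightarrow> bool" where
  "complete_ext F S \<longleftrightarrow> admissible F S \<and> (\<forall>a\<in>fst F. defends F S a \<longrightarrow> a \<in> S)"

definition grounded_sem :: "'a af \<Rightarrow> 'a set set" where
  "grounded_sem F = {S. complete_ext F S \<and> \<not> (\<exists>T. complete_ext F T \<and> T \<subset> S)}"

definition initial_set :: "'a af \<Rightarrow> 'a set \<Rightarrow> bool" where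
  "initial_set F S \<longleftrightarrow> S \<noteq> {} \<and> admissible F S \<and>
     \<not> (\<exists>T. T \<noteq> {} \<and> T \<subset> S \<and> admissible F T)"

definition IS :: "'a af \<Rightarrow> 'a set set" where
  "IS F = {S. initial_set F S}"

definition IS_u :: "'a af \<Rightarrow> 'a set set" where
  "IS_u F = {S \<in> IS F. minus_set F S = {}}"

definition IS_uc :: "'a af \<Rightarrow> 'a set set" where
  "IS_uc F = {S \<in> IS F. minus_set F S \<noteq> {} \<and> \<not> (\<exists>S'\<in>IS F. attacks_set F S' S)}"

definition IS_c :: "'a af \<Rightarrow> 'a set set" where
  "IS_c F = {S \<in> IS F. \<exists>S'\<in>IS F. attacks_set F S' S}"

definition reduct :: "'a af \<Rightarrow> 'a set \<Rightarrow> 'a af" where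
  "reduct F S = (let A' = fst F - (S \<union> plus_set F S) in (A', snd F \<inter> (A' \<times> A')))"

text \<open>Selection functions map three sets of sets of arguments to a subset of their union;
  termination functions map states (F, S) to 0/1 (rendered as bool: True = 1).\<close>
type_synonym 'a selection = "'a set set \<Rightarrow> 'a set set \<Rightarrow> 'a set set \<Rightarrow> 'a set set"
type_synonym 'a term_fun = "'a af \<Rightarrow> 'a set \<Rightarrow> bool"

definition selection_function :: "'a selection \<Rightarrow> bool" where
  "selection_function \<alpha> \<longleftrightarrow> (\<forall>X Y Z. \<alpha> X Y Z \<subseteq> X \<union> Y \<union> Z)"

inductive trans_step :: "'a selection \<Rightarrow> ('a af \<times> 'a set) \<Rightarrow> ('a af \<times> 'a set) \<Rightarrow> bool"
  for \<alpha> where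
  "S' \<in> \<alpha> (IS_u F) (IS_uc F) (IS_c F) \<Longrightarrow> trans_step \<alpha> (F, S) (reduct F S', S \<union> S')"

definition leadsto :: "'a selection \<Rightarrow> 'a term_fun \<Rightarrow> ('a af \<times> 'a set) \<Rightarrow> ('a af \<times> 'a set) \<Rightarrow> bool" where
  "leadsto \<alpha> \<beta> c c' \<longleftrightarrow> (trans_step \<alpha>)\<^sup>*\<^sup>* c c' \<and> \<beta> (fst c') (snd c')"

definition ext_ser :: "'a selection \<Rightarrow> 'a term_fun \<Rightarrow> 'a af \<Rightarrow> 'a set set" where
  "ext_ser \<alpha> \<beta> F = {S. \<exists>F'. leadsto \<alpha> \<beta> (F, {}) (F', S)}"

definition serialisable_with :: "('a af \<Rightarrow> 'a set set) \<Rightarrow> 'a selection \<Rightarrow> 'a term_fun \<Rightarrow> bool" where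
  "serialisable_with \<sigma> \<alpha> \<beta> \<longleftrightarrow> (\<forall>F. is_AF F \<longrightarrow> \<sigma> F = ext_ser \<alpha> \<beta> F)"

definition alpha_gr :: "'a selection" where
  "alpha_gr X Y Z = X"

definition beta_co :: "'a term_fun" where
  "beta_co F S \<longleftrightarrow> IS_u F = {}"

end

theory Submission
  imports Defs
begin

lemma reduct_fst: "fst (reduct F S) = fst F - (S \<union> plus_set F S)"
  by (simp add: reduct_def Let_def)

lemma reduct_snd: "snd (reduct F S) = snd F \<inter> (fst (reduct F S) \<times> fst (reduct F S))"
  by (simp add: reduct_def Let_def)

lemma step_lemma:
  assumes AF: "R \<subseteq> A \<times> A" and F': "F' = reduct (A,R) S"
    and adm: "admissible (A,R) S" and sub: "\<forall>T. complete_ext (A,R) T \<longrightarrow> S \<subseteq> T"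
    and S': "S' \<in> IS_u F'"
  shows "reduct F' S' = reduct (A,R) (S \<union> S') \<and> admissible (A,R) (S \<union> S')
     \<and> (\<forall>T. complete_ext (A,R) T \<longrightarrow> S \<union> S' \<subseteq> T)"
proof -
  define A' where "A' = A - (S \<union> plus_set (A,R) S)"
  have F'eq: "F' = (A', R \<inter> (A' \<times> A'))" using F' by (simp add: reduct_def A'_def Let_def)
  have S'A: "S' \<subseteq> A'" and cfS': "conflict_free F' S'" and unatt: "minus_set F' S' = {}"
    using S' by (auto simp: IS_u_def IS_def initial_set_def admissible_def F'eq)
  have K: "\<exists>c\<in>S. (c,b)\<in>R" if a: "a \<in> S'" and ba: "(b,a) \<in> R" for a b
  proof -
    have bA: "b \<in> A" using AF ba by auto
    have aA': "a \<in> A'" using S'A a by auto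
    have "b \<notin> A'"
    proof
      assume "b \<in> A'"
      then have "b \<in> minus_set F' S'" using a ba aA' by (auto simp: minus_set_def F'eq)
      then show False using unatt by auto
    qed
    then have "b \<in> S \<union> plus_set (A,R) S" using bA by (auto simp: A'_def)
    moreover have "b \<notin> S" using aA' ba by (auto simp: A'_def plus_set_def)
    ultimately show ?thesis by (auto simp: plus_set_def)
  qed
  have admS: "S \<subseteq> A" "conflict_free (A,R) S" "\<forall>a\<in>S. defends (A,R) S a"
    using adm by (auto simp: admissible_def)
  have notplus: "(s, a) \<notin> R" if "s \<in> S" "a \<in> S'" for s a
    using that S'A by (auto simp: A'_def plus_set_def)
  have notback: "(a, s) \<notin> R" if sS: "s \<in> S" and aS': "a \<in> S'" for s a
  proof
    assume as: "(a, s) \<in> R"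
    then obtain c where "c \<in> S" "(c, a) \<in> R" using admS(3) sS as unfolding defends_def by fastforce
    then show False using notplus aS' by blast
  qed
  have cf: "conflict_free (A,R) (S \<union> S')"
    unfolding conflict_free_def
  proof (intro ballI)
    fix x y assume x: "x \<in> S \<union> S'" and y: "y \<in> S \<union> S'"
    show "(x, y) \<notin> snd (A, R)"
    proof (cases "x \<in> S")
      case True
      then show ?thesis
      proof (cases "y \<in> S")
        case True then show ?thesis using \<open>x \<in> S\<close> admS(2) by (auto simp: conflict_free_def)
      next
        case False then show ?thesis using \<open>x \<in> S\<close> y notplus by auto
      qed
    next
      case False
      then have xS': "x \<in> S'" using x by auto
      show ?thesis
      proof (cases "y \<in> S")
        case True then show ?thesis using xS' notback by auto
      next
        case False then have "y \<in> S'" using y by auto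
        then show ?thesis using xS' cfS' S'A by (auto simp: conflict_free_def F'eq)
      qed
    qed
  qed
  have def1: "defends (A,R) (S \<union> S') a" if "a \<in> S \<union> S'" for a
  proof (cases "a \<in> S")
    case True then show ?thesis using admS(3) by (auto simp: defends_def)
  next
    case False then show ?thesis using that K by (auto simp: defends_def)
  qed
  have S'A0: "S' \<subseteq> A" using S'A by (auto simp: A'_def)
  have adm2: "admissible (A,R) (S \<union> S')"
    using cf def1 admS(1) S'A0 by (auto simp: admissible_def)
  have sub2: "S \<union> S' \<subseteq> T" if T: "complete_ext (A,R) T" for T
  proof -
    have ST: "S \<subseteq> T" using sub T by auto
    have "a \<in> T" if a: "a \<in> S'" for a
    proof -
      have "defends (A,R) T a" using K[OF a] ST by (auto simp: defends_def)
      then show ?thesis using T a S'A0 by (auto simp: complete_ext_def)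
    qed
    then show ?thesis using ST by auto
  qed
  have ps: "plus_set F' S' = plus_set (A,R) S' \<inter> A'"
    using S'A by (auto simp: plus_set_def F'eq)
  have pu: "plus_set (A,R) (S \<union> S') = plus_set (A,R) S \<union> plus_set (A,R) S'"
    by (auto simp: plus_set_def)
  have fsteq: "fst (reduct F' S') = fst (reduct (A,R) (S \<union> S'))"
    unfolding reduct_fst ps pu by (auto simp: F'eq A'_def)
  have sub3: "fst (reduct F' S') \<subseteq> A'" unfolding reduct_fst by (auto simp: F'eq)
  have "snd (reduct F' S') = snd (reduct (A,R) (S \<union> S'))"
    apply (subst reduct_snd, subst reduct_snd[of "(A,R)"])
    using fsteq sub3 by (auto simp: F'eq)
  then have "reduct F' S' = reduct (A,R) (S \<union> S')" using fsteq by (simp add: prod_eq_iff)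
  then show ?thesis using adm2 sub2 by blast
qed

lemma inv_lemma:
  assumes AF: "R \<subseteq> A \<times> A" and r: "(trans_step alpha_gr)\<^sup>*\<^sup>* ((A,R), {}) c"
  shows "fst c = reduct (A,R) (snd c) \<and> admissible (A,R) (snd c)
     \<and> (\<forall>T. complete_ext (A,R) T \<longrightarrow> snd c \<subseteq> T)"
  using r
proof (induction c rule: rtranclp_induct)
  case base
  have "reduct (A,R) {} = (A,R)" using AF by (auto simp: reduct_def plus_set_def Let_def)
  then show ?case
    by (auto simp: admissible_def conflict_free_def defends_def)
next
  case (step y z)
  from step(2) obtain F' S S' where y: "y = (F', S)" and z: "z = (reduct F' S', S \<union> S')"
    and S': "S' \<in> IS_u F'"
    by (cases rule: trans_step.cases) (auto simp: alpha_gr_def)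
  show ?case using step_lemma[OF AF _ _ _ S', of S] step(3) y z by auto
qed

lemma final_lemma:
  assumes AF: "R \<subseteq> A \<times> A" and F': "F' = reduct (A,R) S"
    and adm: "admissible (A,R) S" and none: "IS_u F' = {}"
  shows "complete_ext (A,R) S"
proof -
  define A' where "A' = A - (S \<union> plus_set (A,R) S)"
  have F'eq: "F' = (A', R \<inter> (A' \<times> A'))" using F' by (simp add: reduct_def A'_def Let_def)
  have "a \<in> S" if aA: "a \<in> A" and d: "defends (A,R) S a" for a
  proof (rule ccontr)
    assume aS: "a \<notin> S"
    have "a \<notin> plus_set (A,R) S"
    proof
      assume "a \<in> plus_set (A,R) S"
      then obtain s where s: "s \<in> S" "(s,a) \<in> R" by (auto simp: plus_set_def)
      then obtain c where "c \<in> S" "(c,s) \<in> R" using d by (auto simp: defends_def)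
      then show False using s adm by (auto simp: admissible_def conflict_free_def)
    qed
    then have aA': "a \<in> A'" using aA aS by (auto simp: A'_def)
    have noatt: "(b,a) \<notin> snd F'" for b
    proof
      assume "(b,a) \<in> snd F'"
      then have "b \<in> A'" "(b,a) \<in> R" by (auto simp: F'eq)
      moreover then obtain c where "c \<in> S" "(c,b) \<in> R" using d by (auto simp: defends_def)
      ultimately show False by (auto simp: A'_def plus_set_def)
    qed
    have "initial_set F' {a}"
      unfolding initial_set_def admissible_def conflict_free_def defends_def
      using aA' noatt by (auto simp: F'eq)
    moreover have "minus_set F' {a} = {}" using noatt by (auto simp: minus_set_def)
    ultimately have "{a} \<in> IS_u F'" by (auto simp: IS_u_def IS_def)
    then show False using none by auto
  qed
  then show ?thesis using adm by (auto simp: complete_ext_def)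
qed

lemma exists_lemma:
  "finite (fst F') \<Longrightarrow> \<exists>c. (trans_step alpha_gr)\<^sup>*\<^sup>* (F', S) c \<and> IS_u (fst c) = {}"
proof (induction "card (fst F')" arbitrary: F' S rule: less_induct)
  case less
  show ?case
  proof (cases "IS_u F' = {}")
    case True then show ?thesis by (intro exI[of _ "(F', S)"]) auto
  next
    case False
    then obtain S' where S': "S' \<in> IS_u F'" by auto
    then have ne: "S' \<noteq> {}" and sub: "S' \<subseteq> fst F'"
      by (auto simp: IS_u_def IS_def initial_set_def admissible_def)
    have st: "trans_step alpha_gr (F', S) (reduct F' S', S \<union> S')"
      using S' by (intro trans_step.intros) (simp add: alpha_gr_def)
    have ss: "fst (reduct F' S') \<subset> fst F'" using ne sub by (auto simp: reduct_fst)
    then have fin: "finite (fst (reduct F' S'))" using less(2) finite_subset by blast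
    have "card (fst (reduct F' S')) < card (fst F')" using ss less(2) psubset_card_mono by blast
    from less(1)[OF this fin] obtain c where
      "(trans_step alpha_gr)\<^sup>*\<^sup>* (reduct F' S', S \<union> S') c" "IS_u (fst c) = {}" by blast
    then show ?thesis using st by (meson converse_rtranclp_into_rtranclp)
  qed
qed

theorem theorem4:
  shows "selection_function alpha_gr \<and> serialisable_with grounded_sem alpha_gr beta_co"
proof
  show "selection_function alpha_gr" by (auto simp: selection_function_def alpha_gr_def)
  show "serialisable_with grounded_sem alpha_gr beta_co"
    unfolding serialisable_with_def
  proof (intro allI impI)
    fix F assume isaf: "is_AF F"
    obtain A R where F: "F = (A,R)" by fastforce
    have AF: "R \<subseteq> A \<times> A" and fin: "finite A" using isaf by (auto simp: is_AF_def F)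
    have good: "complete_ext F S \<and> (\<forall>T. complete_ext F T \<longrightarrow> S \<subseteq> T)"
      if "S \<in> ext_ser alpha_gr beta_co F" for S
    proof -
      from that obtain F' where r: "(trans_step alpha_gr)\<^sup>*\<^sup>* ((A,R), {}) (F', S)"
        and b: "IS_u F' = {}"
        by (auto simp: ext_ser_def leadsto_def beta_co_def F)
      from inv_lemma[OF AF r] have i: "F' = reduct (A,R) S" "admissible (A,R) S"
        "\<forall>T. complete_ext (A,R) T \<longrightarrow> S \<subseteq> T" by auto
      show ?thesis using final_lemma[OF AF i(1,2) b] i(3) F by auto
    qed
    obtain c where c: "(trans_step alpha_gr)\<^sup>*\<^sup>* (F, {}) c" "IS_u (fst c) = {}"
      using exists_lemma[of F "{}"] fin F by auto
    have S0: "snd c \<in> ext_ser alpha_gr beta_co F"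
      using c by (cases c) (auto simp: ext_ser_def leadsto_def beta_co_def)
    show "grounded_sem F = ext_ser alpha_gr beta_co F"
    proof
      show "ext_ser alpha_gr beta_co F \<subseteq> grounded_sem F"
      proof
        fix S assume "S \<in> ext_ser alpha_gr beta_co F"
        from good[OF this] show "S \<in> grounded_sem F" by (auto simp: grounded_sem_def)
      qed
      show "grounded_sem F \<subseteq> ext_ser alpha_gr beta_co F"
      proof
        fix T assume T: "T \<in> grounded_sem F"
        from good[OF S0] T have "snd c = T" by (auto simp: grounded_sem_def)
        then show "T \<in> ext_ser alpha_gr beta_co F" using S0 by simp
      qed
    qed
  qed
qed

end
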